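(* Let $N\ge2$, $1\le r\le N-1$, $m\ge2$, $\alpha=\begin{pmatrix}\alpha_{11}&\alpha_{12}\\\alpha_{21}&\alpha_{22}\end{pmatrix}\in\mathbb{C}^{N\times N}$. Let $$\beta_{m-1}=\sum_{i\ge0}\begin{pmatrix}A_{m-1,i}&B_{m-1,i}\\C_{m-1,i}&D_{m-1,i}\end{pmatrix}\epsilon^i,\qquad \beta_m=\begin{pmatrix}0&0\\C_{m,0}&D_{m,0}\end{pmatrix}+\sum_{i\ge1}\begin{pmatrix}A_{m,i}&B_{m,i}\\C_{m,i}&D_{m,i}\end{pmatrix}\epsilon^i$$ with $\det\beta_m=O(\epsilon^r)$ and $\det D_{m,0}\neq0$, and let $\beta_{m+1}=m\beta_m^{-1}-\beta_{m-1}-\beta_m-\alpha$. Put $S:=A_{m,1}-B_{m,1}D_{m,0}^{-1}C_{m,0}\in\mathbb{C}^{r\times r}$ (which is invertible). Then, as $\epsilon\to0$, $$\det\beta_{m+1}=\epsilon^{-r}\det\begin{pmatrix}mS^{-1}&-mS^{-1}B_{m,1}D_{m,0}^{-1}-B_{m-1,0}-\alpha_{12}\\-mD_{m,0}^{-1}C_{m,0}S^{-1}&mD_{m,0}^{-1}+mD_{m,0}^{-1}C_{m,0}S^{-1}B_{m,1}D_{m,0}^{-1}-D_{m-1,0}-D_{m,0}-\alpha_{22}\end{pmatrix}+O(\epsilon^{-r+1}).$$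
   Context: Blocks: upper-left $r\times r$, upper-right $r\times(N-r)$, lower-left $(N-r)\times r$, lower-right $(N-r)\times(N-r)$. Expansions are asymptotic expansions in $\epsilon\to0$, inverses computed in the ring of Laurent expansions; $\det\beta_m=O(\epsilon^r)$ means $\det\beta_m=c\epsilon^r+O(\epsilon^{r+1})$ with $c\ne0$. *)

theory Defs
  imports "HOL-Computational_Algebra.Formal_Laurent_Series" "Jordan_Normal_Form.Determinant"
begin

(* i-th coefficient matrix of a matrix of formal power series in epsilon *)
definition coeff_mat :: "'a::zero fps mat \<Rightarrow> nat \<Rightarrow> 'a mat" where
  "coeff_mat M i = map_mat (\<lambda>f. f $ i) M"

definition to_fls_mat :: "'a::zero fps mat \<Rightarrow> 'a fls mat" where
  "to_fls_mat M = map_mat fps_to_fls M"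

definition const_fls_mat :: "'a::zero mat \<Rightarrow> 'a fls mat" where
  "const_fls_mat M = map_mat fls_const M"

definition mat_inv :: "'a::field mat \<Rightarrow> 'a mat" where
  "mat_inv A = inverse (det A) \<cdot>\<^sub>m adj_mat A"

definition bigO_eps :: "'a::zero fls \<Rightarrow> int \<Rightarrow> bool" where
  "bigO_eps f k \<longleftrightarrow> f = 0 \<or> fls_subdegree f \<ge> k"

end

theory Submission imports Defs begin


lemma mult_diag_right:
  assumes "K \<in> carrier_mat n m" "i < n" "j < m"
  shows "(K * mat m m (\<lambda>(i,j). if i = j then d i else 0)) $$ (i,j) = K $$ (i,j) * (d j :: 'a::comm_ring_1)"
  using assms by (simp add: scalar_prod_def if_distrib[of "\<lambda>x. _ * x"] cong: if_cong)

lemma mult_diag_left: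
  assumes "K \<in> carrier_mat m n" "i < m" "j < n"
  shows "(mat m m (\<lambda>(i,j). if i = j then d i else 0) * K) $$ (i,j) = (d i :: 'a::comm_ring_1) * K $$ (i,j)"
  using assms by (simp add: scalar_prod_def if_distrib[of "\<lambda>x. x * _"] cong: if_cong)

lemma smult_inv_one: "(a::'a::field) \<noteq> 0 \<Longrightarrow> inverse a \<cdot>\<^sub>m (a \<cdot>\<^sub>m 1\<^sub>m n) = 1\<^sub>m n"
  by (rule eq_matI) auto

lemma mat_inv_left:
  fixes A :: "'a::field mat"
  assumes "A \<in> carrier_mat n n" "det A \<noteq> 0"
  shows "mat_inv A * A = 1\<^sub>m n"
  using assms unfolding mat_inv_def
  by (simp add: mult_smult_assoc_mat[OF adj_mat(1)[OF assms(1)] assms(1)] adj_mat(3)[OF assms(1)] smult_inv_one)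

lemma mat_inv_right:
  fixes A :: "'a::field mat"
  assumes "A \<in> carrier_mat n n" "det A \<noteq> 0"
  shows "A * mat_inv A = 1\<^sub>m n"
  using assms unfolding mat_inv_def
  by (simp add: mult_smult_distrib[OF assms(1) adj_mat(1)[OF assms(1)]] adj_mat(2)[OF assms(1)] smult_inv_one)

lemma mat_inv_carrier: "A \<in> carrier_mat n n \<Longrightarrow> mat_inv A \<in> carrier_mat n n"
  unfolding mat_inv_def using adj_mat(1)[of A n] by simp

lemma mat_inv_unique:
  fixes A :: "'a::field mat"
  assumes "A \<in> carrier_mat n n" "det A \<noteq> 0" "X \<in> carrier_mat n n" "A * X = 1\<^sub>m n"
  shows "X = mat_inv A"
proof -
  have "X = (mat_inv A * A) * X" using mat_inv_left[OF assms(1,2)] assms(3) by simp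
  also have "\<dots> = mat_inv A * (A * X)" using assms mat_inv_carrier by (metis assoc_mult_mat)
  also have "\<dots> = mat_inv A" using assms(4) mat_inv_carrier[OF assms(1)] by simp
  finally show ?thesis .
qed

lemma mat_add_sub_cancel: "(X :: 'a::ab_group_add mat) \<in> carrier_mat a b \<Longrightarrow> Y \<in> carrier_mat a b \<Longrightarrow> X + Y - Y = X"
  by (intro eq_matI) auto

lemma mat_eq_add_of_sub: "(X :: 'a::ab_group_add mat) \<in> carrier_mat a b \<Longrightarrow> Y \<in> carrier_mat a b \<Longrightarrow> Z \<in> carrier_mat a b
  \<Longrightarrow> X - Y = Z \<Longrightarrow> X = Z + Y"
  by (intro eq_matI) (auto dest!: arg_cong[of _ _ "\<lambda>M. M $$ (_,_)"])

lemma mat_neg_add_cancel: "(Y :: 'a::ab_group_add mat) \<in> carrier_mat a b \<Longrightarrow> Z \<in> carrier_mat a b \<Longrightarrow> - Y + (Z + Y) = Z"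
  by (intro eq_matI) auto

lemma mat_neg_add_cancel': "(Y :: 'a::ab_group_add mat) \<in> carrier_mat a b \<Longrightarrow> Z \<in> carrier_mat a b \<Longrightarrow> - (Z + Y) + (Z + Y) = 0\<^sub>m a b"
  by (intro eq_matI) auto

lemma massoc3: "A \<in> carrier_mat a b \<Longrightarrow> B \<in> carrier_mat b c \<Longrightarrow> C \<in> carrier_mat c d
  \<Longrightarrow> A * B * C = A * (B * (C :: 'x::semiring_0 mat))"
  by (rule assoc_mult_mat)

lemma massoc4: "A \<in> carrier_mat a b \<Longrightarrow> B \<in> carrier_mat b c \<Longrightarrow> C \<in> carrier_mat c d
  \<Longrightarrow> D \<in> carrier_mat d e \<Longrightarrow> A * B * C * D = A * (B * (C * (D :: 'x::semiring_0 mat)))"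
proof -
  assume a: "A \<in> carrier_mat a b" and b: "B \<in> carrier_mat b c" and c: "C \<in> carrier_mat c d" and d: "D \<in> carrier_mat d e"
  have "A * B * C * D = (A * (B * C)) * D" by (simp only: assoc_mult_mat[OF a b c])
  also have "\<dots> = A * ((B * C) * D)" by (rule assoc_mult_mat[OF a mult_carrier_mat[OF b c] d])
  also have "\<dots> = A * (B * (C * D))" by (simp only: assoc_mult_mat[OF b c d])
  finally show ?thesis .
qed

lemma massoc5: "A \<in> carrier_mat a b \<Longrightarrow> B \<in> carrier_mat b c \<Longrightarrow> C \<in> carrier_mat c d
  \<Longrightarrow> D \<in> carrier_mat d e \<Longrightarrow> F \<in> carrier_mat e g \<Longrightarrow> A * B * C * D * F = A * (B * (C * (D * (F :: 'x::semiring_0 mat))))"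
proof -
  assume a: "A \<in> carrier_mat a b" and b: "B \<in> carrier_mat b c" and c: "C \<in> carrier_mat c d" and d: "D \<in> carrier_mat d e"
    and f: "F \<in> carrier_mat e g"
  have "A * B * C * D * F = (A * (B * (C * D))) * F" by (simp only: massoc4[OF a b c d])
  also have "\<dots> = A * ((B * (C * D)) * F)"
    by (rule assoc_mult_mat[OF a mult_carrier_mat[OF b mult_carrier_mat[OF c d]] f])
  also have "(B * (C * D)) * F = B * ((C * D) * F)" by (rule assoc_mult_mat[OF b mult_carrier_mat[OF c d] f])
  also have "(C * D) * F = C * (D * F)" by (rule assoc_mult_mat[OF c d f])
  finally show ?thesis .
qed

lemma coeff_idx: "i < dim_row M \<Longrightarrow> j < dim_col M \<Longrightarrow> coeff_mat M k $$ (i,j) = M $$ (i,j) $ k"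
  unfolding coeff_mat_def by simp

lemma mat_add_neg_cancel: "(Y :: 'a::ab_group_add mat) \<in> carrier_mat a b \<Longrightarrow> Z \<in> carrier_mat a b \<Longrightarrow> (Z + Y) + - Y = Z"
  by (intro eq_matI) auto

lemma mat_add_neg_self: "(Y :: 'a::ab_group_add mat) \<in> carrier_mat a b \<Longrightarrow> Y + - Y = 0\<^sub>m a b"
  by (intro eq_matI) auto

interpretation fls_hom: comm_ring_hom "fps_to_fls :: 'a::comm_ring_1 fps \<Rightarrow> 'a fls"
  by unfold_locales (auto simp: fls_times_fps_to_fls)

interpretation c0_hom: comm_ring_hom "\<lambda>f::'a::comm_ring_1 fps. f $ 0"
  by unfold_locales auto



lemma fpsX_shift: "f $ 0 = 0 \<Longrightarrow> fps_X * fps_shift (Suc 0) f = (f :: 'a::comm_ring_1 fps)"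
  by (intro fps_ext) (auto simp: fps_X_mult_nth)

theorem lemma2:
  fixes N r m :: nat
    and \<alpha> :: "complex mat"
    and \<beta>0 \<beta>1 :: "complex fps mat"  (* \<beta>0 = beta_{m-1}, \<beta>1 = beta_m *)
    and \<alpha>11 \<alpha>12 \<alpha>21 \<alpha>22 :: "complex mat"
    and A00 B00 C00 D00 :: "complex mat"  (* blocks of coefficient 0 of beta_{m-1} *)
    and A10 B10 C10 D10 :: "complex mat"  (* blocks of coefficient 0 of beta_m *)
    and A11 B11 C11 D11 :: "complex mat"  (* blocks of coefficient 1 of beta_m *)
  assumes "N \<ge> 2" and "1 \<le> r" and "r \<le> N - 1" and "m \<ge> 2"
    and "\<alpha> \<in> carrier_mat N N"
    and "\<beta>0 \<in> carrier_mat N N" and "\<beta>1 \<in> carrier_mat N N"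
    and "split_block \<alpha> r r = (\<alpha>11, \<alpha>12, \<alpha>21, \<alpha>22)"
    and "split_block (coeff_mat \<beta>0 0) r r = (A00, B00, C00, D00)"
    and "split_block (coeff_mat \<beta>1 0) r r = (A10, B10, C10, D10)"
    and "split_block (coeff_mat \<beta>1 1) r r = (A11, B11, C11, D11)"
    and "A10 = 0\<^sub>m r r" and "B10 = 0\<^sub>m r (N - r)"
    and "det (to_fls_mat \<beta>1) \<noteq> 0"
    and "fls_subdegree (det (to_fls_mat \<beta>1)) = int r"
    and "det D10 \<noteq> 0"
  shows "let
      \<beta>2 = of_nat m \<cdot>\<^sub>m mat_inv (to_fls_mat \<beta>1) - to_fls_mat \<beta>0 - to_fls_mat \<beta>1
             - const_fls_mat \<alpha>;
      Di = mat_inv D10;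
      S = A11 - B11 * Di * C10;
      Si = mat_inv S;
      M = four_block_mat
            (of_nat m \<cdot>\<^sub>m Si)
            (- (of_nat m \<cdot>\<^sub>m (Si * B11 * Di)) - B00 - \<alpha>12)
            (- (of_nat m \<cdot>\<^sub>m (Di * C10 * Si)))
            (of_nat m \<cdot>\<^sub>m Di + of_nat m \<cdot>\<^sub>m (Di * C10 * Si * B11 * Di) - D00 - D10 - \<alpha>22)
    in det S \<noteq> 0 \<and>
       bigO_eps (det \<beta>2 - fls_X_intpow (- int r) * fls_const (det M)) (- int r + 1)"
proof -
  note A = assms
  define n2 where "n2 = N - r"
  have Nr: "N = r + n2" using A(2,3) unfolding n2_def by simp
  have cN: "coeff_mat X k \<in> carrier_mat N N" if "X \<in> carrier_mat N N" for X :: "complex fps mat" and k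
    using that unfolding coeff_mat_def by simp
  have sb0: "A00 \<in> carrier_mat r r" "B00 \<in> carrier_mat r n2" "C00 \<in> carrier_mat n2 r" "D00 \<in> carrier_mat n2 n2"
     "coeff_mat \<beta>0 0 = four_block_mat A00 B00 C00 D00"
    using split_block[OF A(9), of n2 n2] cN[OF A(6)] Nr by auto
  have sb1: "A10 \<in> carrier_mat r r" "B10 \<in> carrier_mat r n2" "C10 \<in> carrier_mat n2 r" "D10 \<in> carrier_mat n2 n2"
     "coeff_mat \<beta>1 0 = four_block_mat A10 B10 C10 D10"
    using split_block[OF A(10), of n2 n2] cN[OF A(7)] Nr by auto
  have sb2: "A11 \<in> carrier_mat r r" "B11 \<in> carrier_mat r n2" "C11 \<in> carrier_mat n2 r" "D11 \<in> carrier_mat n2 n2"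
     "coeff_mat \<beta>1 1 = four_block_mat A11 B11 C11 D11"
    using split_block[OF A(11), of n2 n2] cN[OF A(7)] Nr by auto
  have sba: "\<alpha>11 \<in> carrier_mat r r" "\<alpha>12 \<in> carrier_mat r n2" "\<alpha>21 \<in> carrier_mat n2 r" "\<alpha>22 \<in> carrier_mat n2 n2"
     "\<alpha> = four_block_mat \<alpha>11 \<alpha>12 \<alpha>21 \<alpha>22"
    using split_block[OF A(8), of n2 n2] A(5) Nr by auto
  have e0: "\<beta>0 $$ (i,j) $ 0 = four_block_mat A00 B00 C00 D00 $$ (i,j)" if "i < N" "j < N" for i j
    using coeff_idx[of i \<beta>0 j 0] that A(6) unfolding sb0(5) by simp
  have e1: "\<beta>1 $$ (i,j) $ 0 = four_block_mat A10 B10 C10 D10 $$ (i,j)" if "i < N" "j < N" for i j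
    using coeff_idx[of i \<beta>1 j 0] that A(7) unfolding sb1(5) by simp
  have e2: "\<beta>1 $$ (i,j) $ 1 = four_block_mat A11 B11 C11 D11 $$ (i,j)" if "i < N" "j < N" for i j
    using coeff_idx[of i \<beta>1 j 1] that A(7) unfolding sb2(5) by simp
  have ea: "\<alpha> $$ (i,j) = four_block_mat \<alpha>11 \<alpha>12 \<alpha>21 \<alpha>22 $$ (i,j)" for i j
    using sba(5) by simp
  have z1: "\<beta>1 $$ (i,j) $ 0 = 0" if "i < r" "j < N" for i j
    using e1[of i j] that A(12,13) sb1 Nr unfolding n2_def[symmetric] by auto
  define e where "e = (\<lambda>i. if i < r then fps_X else (1 :: complex fps))"
  define E' where "E' = mat N N (\<lambda>(i,j). if i = j then e i else 0)"
  define G' where "G' = mat N N (\<lambda>(i,j). if i < r then fps_shift 1 (\<beta>1 $$ (i,j)) else \<beta>1 $$ (i,j))"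
  have E'c: "E' \<in> carrier_mat N N" and G'c: "G' \<in> carrier_mat N N" unfolding E'_def G'_def by auto
  have b1EG: "\<beta>1 = E' * G'"
  proof (rule eq_matI)
    fix i j assume ij: "i < dim_row (E' * G')" "j < dim_col (E' * G')"
    hence ij': "i < N" "j < N" using E'c G'c by auto
    have "(E' * G') $$ (i,j) = e i * G' $$ (i,j)" unfolding E'_def
      using mult_diag_left[OF G'c ij'] .
    also have "\<dots> = \<beta>1 $$ (i,j)" using ij' z1[of i j] unfolding e_def G'_def
      by (auto simp: fpsX_shift)
    finally show "\<beta>1 $$ (i,j) = (E' * G') $$ (i,j)" by simp
  qed (use A(7) E'c G'c in auto)
  have E'fb: "E' = four_block_mat (fps_X \<cdot>\<^sub>m 1\<^sub>m r) (0\<^sub>m r n2) (0\<^sub>m n2 r) (1\<^sub>m n2)"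
    unfolding E'_def e_def by (rule eq_matI) (auto simp: Nr)
  have detE': "det E' = fps_X ^ r"
    unfolding E'fb by (subst det_four_block_mat_lower_left_zero[of _ r _ n2]) auto
  have detb1: "det \<beta>1 = fps_X ^ r * det G'"
    using b1EG det_mult[OF E'c G'c] detE' by simp
  have hd1: "det (to_fls_mat \<beta>1) = fps_to_fls (det \<beta>1)"
    unfolding to_fls_mat_def by (rule fls_hom.hom_det)
  have detb1nz: "det \<beta>1 \<noteq> 0" using A(14) hd1 by auto
  hence detG'nz: "det G' \<noteq> 0" using detb1 by auto
  have "int (subdegree (det \<beta>1)) = int r" using A(15) hd1 fls_subdegree_fls_to_fps by metis
  hence "subdegree (det G') = 0" using detb1 detG'nz by simp
  hence detG'0: "det G' $ 0 \<noteq> 0" using detG'nz subdegree_eq_0_iff by blast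
  define G0 where "G0 = coeff_mat G' 0"
  have G0c: "G0 \<in> carrier_mat N N" using cN[OF G'c] unfolding G0_def .
  have detG0: "det G0 = det G' $ 0" unfolding G0_def coeff_mat_def by (rule c0_hom.hom_det)
  have G0fb: "G0 = four_block_mat A11 B11 C10 D10"
  proof (rule eq_matI)
    fix i j assume "i < dim_row (four_block_mat A11 B11 C10 D10)" "j < dim_col (four_block_mat A11 B11 C10 D10)"
    hence ij: "i < N" "j < N" using sb1 sb2 Nr by auto
    show "G0 $$ (i,j) = four_block_mat A11 B11 C10 D10 $$ (i,j)"
      using ij e1[OF ij] e2[OF ij] sb1 sb2 Nr unfolding G0_def coeff_mat_def G'_def by auto
  qed (use G0c sb1 sb2 Nr in auto)
  define Di where "Di = mat_inv D10"
  define S where "S = A11 - B11 * Di * C10"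
  define Si where "Si = mat_inv S"
  have Dic: "Di \<in> carrier_mat n2 n2" unfolding Di_def using mat_inv_carrier sb1 by blast
  have Sc: "S \<in> carrier_mat r r" unfolding S_def using Dic sb1 sb2 by auto
  have Sic: "Si \<in> carrier_mat r r" unfolding Si_def using mat_inv_carrier Sc by blast
  have DDi: "D10 * Di = 1\<^sub>m n2" "Di * D10 = 1\<^sub>m n2"
    unfolding Di_def using mat_inv_left mat_inv_right sb1(4) A(16) by blast+
  define U where "U = four_block_mat (1\<^sub>m r) (B11 * Di) (0\<^sub>m n2 r) (1\<^sub>m n2)"
  define L where "L = four_block_mat S (0\<^sub>m r n2) C10 D10"
  have Uc: "U \<in> carrier_mat N N" unfolding U_def Nr using sb2 Dic by auto
  have Lc: "L \<in> carrier_mat N N" unfolding L_def Nr using Sc sb1 by auto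
  have AS: "S + B11 * Di * C10 = A11"
  proof -
    have Xc: "B11 * Di * C10 \<in> carrier_mat r r" using sb1 sb2 Dic by auto
    { fix X :: "complex mat" assume "X \<in> carrier_mat r r"
      hence "(A11 - X) + X = A11" by (intro eq_matI) (use sb2 in auto) }
    from this[OF Xc] show ?thesis unfolding S_def .
  qed
  have "U * L = four_block_mat (1\<^sub>m r * S + B11 * Di * C10) (1\<^sub>m r * 0\<^sub>m r n2 + B11 * Di * D10)
      (0\<^sub>m n2 r * S + 1\<^sub>m n2 * C10) (0\<^sub>m n2 r * 0\<^sub>m r n2 + 1\<^sub>m n2 * D10)"
    unfolding U_def L_def
    by (rule mult_four_block_mat[OF one_carrier_mat mult_carrier_mat[OF sb2(2) Dic] zero_carrier_mat
      one_carrier_mat Sc zero_carrier_mat sb1(3) sb1(4)])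
  also have "\<dots> = four_block_mat A11 B11 C10 D10"
  proof -
    have "B11 * Di * D10 = B11" using DDi sb1 sb2 Dic by simp
    thus ?thesis using AS sb1 sb2 Dic Sc by simp
  qed
  finally have G0UL: "G0 = U * L" using G0fb by simp
  have "det U = 1" unfolding U_def
    by (subst det_four_block_mat_lower_left_zero[of _ r _ n2]) (use sb2 Dic in auto)
  moreover have "det L = det S * det D10" unfolding L_def
    by (subst det_four_block_mat_upper_right_zero[of _ r _ n2]) (use Sc sb1 in auto)
  ultimately have detG0': "det G0 = det S * det D10" using G0UL det_mult[OF Uc Lc] by simp
  have detS: "det S \<noteq> 0" using detG0' detG0 detG'0 by auto
  have SSi: "S * Si = 1\<^sub>m r" "Si * S = 1\<^sub>m r"
    unfolding Si_def using mat_inv_left mat_inv_right Sc detS by blast+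
  have DDi': "D10 * (Di * X) = X" if "X \<in> carrier_mat n2 k" for X k
  proof -
    have "D10 * (Di * X) = (D10 * Di) * X" using assoc_mult_mat[OF sb1(4) Dic that] by simp
    also have "\<dots> = X" using DDi(1) left_mult_one_mat[OF that] by simp
    finally show ?thesis .
  qed
  have K1: "A11 * Si = 1\<^sub>m r + B11 * (Di * (C10 * Si))"
  proof -
    have Xc: "B11 * Di * C10 \<in> carrier_mat r r" using sb1 sb2 Dic by auto
    have "1\<^sub>m r = (S + B11 * Di * C10) * Si - B11 * Di * C10 * Si"
      using SSi Sc Sic Xc by (simp add: add_mult_distrib_mat[OF Sc Xc Sic] mat_add_sub_cancel[of _ r r])
    also have "\<dots> = A11 * Si - B11 * (Di * (C10 * Si))"
      using AS massoc4[OF sb2(2) Dic sb1(3) Sic] by simp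
    finally have h: "A11 * Si - B11 * (Di * (C10 * Si)) = 1\<^sub>m r" by simp
    have h1: "B11 * (Di * (C10 * Si)) \<in> carrier_mat r r" using sb1 sb2 Dic Sic by auto
    have h2: "A11 * Si \<in> carrier_mat r r" using sb2 Sic by auto
    show ?thesis by (rule mat_eq_add_of_sub[OF h2 h1 one_carrier_mat h])
  qed
  define Q12 where "Q12 = - (Si * B11 * Di)"
  define Q21 where "Q21 = - (Di * C10 * Si)"
  define Q22 where "Q22 = Di + Di * C10 * Si * B11 * Di"
  define Q where "Q = four_block_mat Si Q12 Q21 Q22"
  have Q12c: "Q12 \<in> carrier_mat r n2" unfolding Q12_def using Sic sb2 Dic by auto
  have Q21c: "Q21 \<in> carrier_mat n2 r" unfolding Q21_def using Sic sb1 Dic by auto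
  have Q22c: "Q22 \<in> carrier_mat n2 n2" unfolding Q22_def using Sic sb1 sb2 Dic by auto
  have Qc: "Q \<in> carrier_mat N N" unfolding Q_def Nr using Sic Q12c Q21c Q22c by auto
  have CSc: "C10 * Si \<in> carrier_mat n2 r" using sb1 Sic by auto
  have BDc: "B11 * Di \<in> carrier_mat r n2" using sb2 Dic by auto
  have SBDc: "Si * (B11 * Di) \<in> carrier_mat r n2" using Sic BDc by auto
  have Q21': "Q21 = - (Di * (C10 * Si))" unfolding Q21_def using massoc3[OF Dic sb1(3) Sic] by simp
  have Q12': "Q12 = - (Si * (B11 * Di))" unfolding Q12_def using massoc3[OF Sic sb2(2) Dic] by simp
  define R where "R = B11 * (Di * (C10 * (Si * (B11 * Di))))"
  have Rc: "R \<in> carrier_mat r n2" unfolding R_def using sb1 sb2 Dic Sic by auto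
  have Q22': "Q22 = Di + Di * (C10 * (Si * (B11 * Di)))"
    unfolding Q22_def using massoc5[OF Dic sb1(3) Sic sb2(2) Dic] by simp
  have b11: "A11 * Si + B11 * Q21 = 1\<^sub>m r"
  proof -
    have "B11 * Q21 = - (B11 * (Di * (C10 * Si)))" unfolding Q21'
      by (rule uminus_mult_right_mat) (use sb2 Dic CSc in auto)
    thus ?thesis unfolding K1
      by (simp only: mat_add_neg_cancel[OF mult_carrier_mat[OF sb2(2) mult_carrier_mat[OF Dic CSc]] one_carrier_mat])
  qed
  have b21: "C10 * Si + D10 * Q21 = 0\<^sub>m n2 r"
  proof -
    have "D10 * Q21 = - (D10 * (Di * (C10 * Si)))" unfolding Q21'
      by (rule uminus_mult_right_mat) (use sb1 Dic CSc in auto)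
    also have "\<dots> = - (C10 * Si)" using DDi'[OF CSc] by simp
    finally show ?thesis using mat_add_neg_self[OF CSc] by simp
  qed
  have YP: "B11 * (Di * (C10 * Si)) * (B11 * Di) = R"
  proof -
    have "B11 * (Di * (C10 * Si)) * (B11 * Di) = B11 * ((Di * (C10 * Si)) * (B11 * Di))"
      by (rule assoc_mult_mat[OF sb2(2) mult_carrier_mat[OF Dic CSc] BDc])
    also have "(Di * (C10 * Si)) * (B11 * Di) = Di * ((C10 * Si) * (B11 * Di))"
      by (rule assoc_mult_mat[OF Dic CSc BDc])
    also have "(C10 * Si) * (B11 * Di) = C10 * (Si * (B11 * Di))"
      by (rule assoc_mult_mat[OF sb1(3) Sic BDc])
    finally show ?thesis unfolding R_def .
  qed
  have ASP: "A11 * (Si * (B11 * Di)) = B11 * Di + R"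
  proof -
    have "A11 * (Si * (B11 * Di)) = (A11 * Si) * (B11 * Di)"
      by (rule assoc_mult_mat[symmetric, OF sb2(1) Sic BDc])
    also have "\<dots> = 1\<^sub>m r * (B11 * Di) + B11 * (Di * (C10 * Si)) * (B11 * Di)" unfolding K1
      by (rule add_mult_distrib_mat[OF one_carrier_mat _ BDc]) (use sb2 Dic CSc in auto)
    also have "\<dots> = B11 * Di + R" using YP left_mult_one_mat[OF BDc] by simp
    finally show ?thesis .
  qed
  have b12: "A11 * Q12 + B11 * Q22 = 0\<^sub>m r n2"
  proof -
    have "A11 * Q12 = - (A11 * (Si * (B11 * Di)))" unfolding Q12'
      by (rule uminus_mult_right_mat) (use sb2 SBDc in auto)
    also have "\<dots> = - (B11 * Di + R)" unfolding ASP ..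
    finally have 1: "A11 * Q12 = - (B11 * Di + R)" .
    have "B11 * Q22 = B11 * Di + B11 * (Di * (C10 * (Si * (B11 * Di))))" unfolding Q22'
      by (rule mult_add_distrib_mat[OF sb2(2) Dic]) (use Dic sb1 SBDc in auto)
    hence 2: "B11 * Q22 = B11 * Di + R" unfolding R_def .
    show ?thesis unfolding 1 2 by (rule mat_neg_add_cancel'[OF Rc BDc])
  qed
  have b22: "C10 * Q12 + D10 * Q22 = 1\<^sub>m n2"
  proof -
    have CSBDc: "C10 * (Si * (B11 * Di)) \<in> carrier_mat n2 n2" using sb1 SBDc by auto
    have 1: "C10 * Q12 = - (C10 * (Si * (B11 * Di)))" unfolding Q12'
      by (rule uminus_mult_right_mat) (use sb1 SBDc in auto)
    have "D10 * Q22 = D10 * Di + D10 * (Di * (C10 * (Si * (B11 * Di))))" unfolding Q22'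
      by (rule mult_add_distrib_mat[OF sb1(4) Dic]) (use Dic sb1 SBDc in auto)
    hence 2: "D10 * Q22 = 1\<^sub>m n2 + C10 * (Si * (B11 * Di))" using DDi(1) DDi'[OF CSBDc] by simp
    show ?thesis unfolding 1 2 by (rule mat_neg_add_cancel[OF CSBDc one_carrier_mat])
  qed
  have G0Q: "G0 * Q = 1\<^sub>m N"
  proof -
    have "G0 * Q = four_block_mat (A11 * Si + B11 * Q21) (A11 * Q12 + B11 * Q22)
        (C10 * Si + D10 * Q21) (C10 * Q12 + D10 * Q22)"
      unfolding G0fb Q_def by (rule mult_four_block_mat[OF sb2(1,2) sb1(3,4) Sic Q12c Q21c Q22c])
    also have "\<dots> = 1\<^sub>m N" unfolding b11 b12 b21 b22 Nr by simp
    finally show ?thesis .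
  qed
  have detG0nz: "det G0 \<noteq> 0" using detG0 detG'0 by simp
  have Qinv: "Q = mat_inv G0" by (rule mat_inv_unique[OF G0c detG0nz Qc G0Q])
  define Ginv' where "Ginv' = inverse (det G') \<cdot>\<^sub>m adj_mat G'"
  have Ginv'c: "Ginv' \<in> carrier_mat N N" unfolding Ginv'_def using adj_mat(1)[OF G'c] by simp
  have G'Gi: "G' * Ginv' = 1\<^sub>m N"
  proof -
    have "G' * Ginv' = inverse (det G') \<cdot>\<^sub>m (G' * adj_mat G')"
      unfolding Ginv'_def by (rule mult_smult_distrib[OF G'c adj_mat(1)[OF G'c]])
    also have "\<dots> = inverse (det G') \<cdot>\<^sub>m (det G' \<cdot>\<^sub>m 1\<^sub>m N)" using adj_mat(2)[OF G'c] by simp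
    also have "\<dots> = 1\<^sub>m N"
      by (rule eq_matI) (auto simp: inverse_mult_eq_1[OF detG'0])
    finally show ?thesis .
  qed
  define X0 where "X0 = coeff_mat Ginv' 0"
  have X0c: "X0 \<in> carrier_mat N N" unfolding X0_def using cN[OF Ginv'c] .
  have "G0 * X0 = coeff_mat (G' * Ginv') 0" unfolding G0_def X0_def coeff_mat_def
    by (rule c0_hom.mat_hom_mult[symmetric, OF G'c Ginv'c])
  also have "\<dots> = 1\<^sub>m N" unfolding G'Gi coeff_mat_def by (rule c0_hom.mat_hom_one)
  finally have "G0 * X0 = 1\<^sub>m N" .
  hence X0Q: "X0 = Q" using mat_inv_unique[OF G0c detG0nz X0c] Qinv by simp
  define E where "E = to_fls_mat E'"
  define G where "G = to_fls_mat G'"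
  define Gi where "Gi = to_fls_mat Ginv'"
  define b1f where "b1f = to_fls_mat \<beta>1"
  have Ec: "E \<in> carrier_mat N N" "G \<in> carrier_mat N N" "Gi \<in> carrier_mat N N" "b1f \<in> carrier_mat N N"
    unfolding E_def G_def Gi_def b1f_def to_fls_mat_def using E'c G'c Ginv'c A(7) by auto
  have b1fEG: "b1f = E * G" unfolding b1f_def E_def G_def to_fls_mat_def b1EG
    by (rule fls_hom.mat_hom_mult[OF E'c G'c])
  have GGi: "G * Gi = 1\<^sub>m N"
  proof -
    have "G * Gi = to_fls_mat (G' * Ginv')" unfolding G_def Gi_def to_fls_mat_def
      by (rule fls_hom.mat_hom_mult[symmetric, OF G'c Ginv'c])
    thus ?thesis unfolding G'Gi to_fls_mat_def using fls_hom.mat_hom_one by simp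
  qed
  define inv1 where "inv1 = mat_inv b1f"
  have inv1c: "inv1 \<in> carrier_mat N N" unfolding inv1_def using mat_inv_carrier Ec(4) by blast
  have inv1b: "inv1 * b1f = 1\<^sub>m N" unfolding inv1_def
    by (rule mat_inv_left[OF Ec(4)]) (use A(14) b1f_def in simp)
  have invE: "inv1 * E = Gi"
  proof -
    have "Gi = (inv1 * b1f) * Gi" using inv1b Ec by simp
    also have "\<dots> = (inv1 * (E * G)) * Gi" unfolding b1fEG ..
    also have "\<dots> = inv1 * ((E * G) * Gi)"
      by (rule assoc_mult_mat[OF inv1c mult_carrier_mat[OF Ec(1) Ec(2)] Ec(3)])
    also have "(E * G) * Gi = E * (G * Gi)" by (rule assoc_mult_mat[OF Ec(1) Ec(2) Ec(3)])
    also have "E * (G * Gi) = E" unfolding GGi using Ec by simp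
    finally show ?thesis by simp
  qed
  define \<beta>2 where "\<beta>2 = of_nat m \<cdot>\<^sub>m mat_inv (to_fls_mat \<beta>1) - to_fls_mat \<beta>0 - to_fls_mat \<beta>1
             - const_fls_mat \<alpha>"
  have \<beta>2c: "\<beta>2 \<in> carrier_mat N N" unfolding \<beta>2_def
    using inv1c A(5,6,7) unfolding inv1_def b1f_def to_fls_mat_def const_fls_mat_def by auto
  define H' where "H' = mat N N (\<lambda>(i,j). of_nat m * Ginv' $$ (i,j) -
      (\<beta>0 $$ (i,j) + \<beta>1 $$ (i,j) + fps_const (\<alpha> $$ (i,j))) * e j)"
  have Ediag: "E = mat N N (\<lambda>(i,j). if i = j then fps_to_fls (e i) else 0)"
    unfolding E_def E'_def to_fls_mat_def by (rule eq_matI) auto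
  have b2E: "\<beta>2 * E = to_fls_mat H'"
  proof (rule eq_matI)
    fix i j assume "i < dim_row (to_fls_mat H')" "j < dim_col (to_fls_mat H')"
    hence ij: "i < N" "j < N" unfolding H'_def to_fls_mat_def by auto
    have key: "inv1 $$ (i,j) * fps_to_fls (e j) = fps_to_fls (Ginv' $$ (i,j))"
    proof -
      have "inv1 $$ (i,j) * fps_to_fls (e j) = (inv1 * E) $$ (i,j)"
        unfolding Ediag using mult_diag_right[OF inv1c ij] by simp
      also have "\<dots> = fps_to_fls (Ginv' $$ (i,j))" unfolding invE Gi_def to_fls_mat_def
        using ij Ginv'c by simp
      finally show ?thesis .
    qed
    have "(\<beta>2 * E) $$ (i,j) = \<beta>2 $$ (i,j) * fps_to_fls (e j)"
      unfolding Ediag using mult_diag_right[OF \<beta>2c ij] by simp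
    also have "\<beta>2 $$ (i,j) = of_nat m * inv1 $$ (i,j) - fps_to_fls (\<beta>0 $$ (i,j))
        - fps_to_fls (\<beta>1 $$ (i,j)) - fls_const (\<alpha> $$ (i,j))"
      unfolding \<beta>2_def inv1_def b1f_def using ij inv1c A(5,6,7)
      unfolding inv1_def b1f_def to_fls_mat_def const_fls_mat_def by simp
    finally have "(\<beta>2 * E) $$ (i,j) = of_nat m * (inv1 $$ (i,j) * fps_to_fls (e j))
       - (fps_to_fls (\<beta>0 $$ (i,j)) + fps_to_fls (\<beta>1 $$ (i,j)) + fls_const (\<alpha> $$ (i,j))) * fps_to_fls (e j)"
      by (simp add: algebra_simps)
    also have "\<dots> = to_fls_mat H' $$ (i,j)"
      unfolding key H'_def to_fls_mat_def using ij
      by (simp add: fls_times_fps_to_fls)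
    finally show "(\<beta>2 * E) $$ (i,j) = to_fls_mat H' $$ (i,j)" .
  qed (use \<beta>2c Ec in \<open>auto simp: H'_def to_fls_mat_def\<close>)
  have detE: "det E = fls_X ^ r" unfolding E_def to_fls_mat_def fls_hom.hom_det detE'
    by (simp add: fps_to_fls_power)
  have hb2: "det \<beta>2 * fls_X ^ r = fps_to_fls (det H')"
  proof -
    have "det \<beta>2 * fls_X ^ r = det (\<beta>2 * E)" using det_mult[OF \<beta>2c Ec(1)] detE by simp
    also have "\<dots> = fps_to_fls (det H')" unfolding b2E to_fls_mat_def by (rule fls_hom.hom_det)
    finally show ?thesis .
  qed
  define M where "M = four_block_mat
            (of_nat m \<cdot>\<^sub>m Si)
            (- (of_nat m \<cdot>\<^sub>m (Si * B11 * Di)) - B00 - \<alpha>12)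
            (- (of_nat m \<cdot>\<^sub>m (Di * C10 * Si)))
            (of_nat m \<cdot>\<^sub>m Di + of_nat m \<cdot>\<^sub>m (Di * C10 * Si * B11 * Di) - D00 - D10 - \<alpha>22)"
  have c3: "Si * B11 * Di \<in> carrier_mat r n2" "Di * C10 * Si \<in> carrier_mat n2 r"
      "Di * C10 * Si * B11 * Di \<in> carrier_mat n2 n2"
    using Sic Dic sb1 sb2 by auto
  have B10z: "B10 = 0\<^sub>m r n2" using A(13) unfolding n2_def .
  have Mc: "M \<in> carrier_mat N N" unfolding M_def carrier_mat_def
    using Sic Dic sba(4) sb0(4) sb1(4) c3 Nr by simp
  have nat0: "(of_nat m :: complex fps) $ 0 = of_nat m" using c0_hom.hom_of_nat[of m] by simp
  have coeffH: "coeff_mat H' 0 = M"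
  proof (rule eq_matI)
    fix i j assume "i < dim_row M" "j < dim_col M"
    hence ij: "i < N" "j < N" using Mc by auto
    have "coeff_mat H' 0 $$ (i,j) = of_nat m * Q $$ (i,j) -
       (four_block_mat A00 B00 C00 D00 $$ (i,j) + four_block_mat A10 B10 C10 D10 $$ (i,j)
        + four_block_mat \<alpha>11 \<alpha>12 \<alpha>21 \<alpha>22 $$ (i,j)) * (if j < r then 0 else 1)"
    proof -
      have "Ginv' $$ (i,j) $ 0 = Q $$ (i,j)" using coeff_idx[of i Ginv' j 0] ij Ginv'c X0Q
        unfolding X0_def by simp
      thus ?thesis using coeff_idx[of i H' j 0] ij e0[OF ij] e1[OF ij] ea[of i j]
        unfolding H'_def e_def by (simp add: nat0)
    qed
    also have "\<dots> = M $$ (i,j)"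
      unfolding M_def Q_def Q12_def Q21_def Q22_def A(12) B10z
      using ij c3 Sic Dic sb0 sb1 sba Nr
      by (cases "i < r"; cases "j < r") (simp_all del: index_mult_mat assoc_mult_mat add: algebra_simps)
    finally show "coeff_mat H' 0 $$ (i,j) = M $$ (i,j)" .
  qed (use Mc in \<open>auto simp: H'_def coeff_mat_def\<close>)
  have detH0: "det H' $ 0 = det M"
    using c0_hom.hom_det[of H'] coeffH unfolding coeff_mat_def by simp
  define g where "g = det H' - fps_const (det M)"
  have g0: "g $ 0 = 0" unfolding g_def using detH0 by simp
  have Xr: "(fls_X ^ r :: complex fls) = fls_X_intpow (int r)" by (simp add: fls_X_power_conv_shift_1)
  have db2: "det \<beta>2 = fls_X_intpow (- int r) * fps_to_fls (det H')"
  proof -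
    have "fls_X_intpow (- int r) * fps_to_fls (det H')
        = fls_X_intpow (- int r) * (fls_X_intpow (int r) * det \<beta>2)"
      using hb2 Xr by (simp add: mult.commute)
    also have "\<dots> = (fls_X_intpow (- int r) * fls_X_intpow (int r)) * det \<beta>2"
      by (simp only: mult.assoc)
    also have "fls_X_intpow (- int r) * fls_X_intpow (int r) = (1 :: complex fls)"
      using fls_X_intpow_times_fls_X_intpow[of "- int r" "int r"] by simp
    finally show ?thesis by simp
  qed
  have diff: "det \<beta>2 - fls_X_intpow (- int r) * fls_const (det M)
      = fls_X_intpow (- int r) * fps_to_fls g"
    unfolding db2 g_def by (simp add: right_diff_distrib)
  have big: "bigO_eps (det \<beta>2 - fls_X_intpow (- int r) * fls_const (det M)) (- int r + 1)"
  proof (cases "g = 0")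
    case True thus ?thesis unfolding bigO_eps_def diff by simp
  next
    case False
    have "subdegree g \<noteq> 0" using False g0 subdegree_eq_0_iff by blast
    moreover have "fls_subdegree (fls_X_intpow (- int r) * fps_to_fls g) = - int r + int (subdegree g)"
      using False by (subst fls_subdegree_mult) (auto simp: fls_subdegree_fls_to_fps fls_shift_eq0_iff)
    ultimately show ?thesis unfolding bigO_eps_def diff by simp
  qed
  show ?thesis
    unfolding Let_def Di_def[symmetric] S_def[symmetric] Si_def[symmetric] M_def[symmetric]
      \<beta>2_def[symmetric]
    using detS big by simp
qed

end
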